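(* Let $G=(V,E,w)$ be a connected weighted multigraph, let $S\subseteq V$, $x\in S$ and $l\ge0$. Let $V'=V\setminus C_S(l,x)$, $S'=S\setminus C_S(l,x)$ and $\psi=\max_{v\in V}d_G(v,S)$. Then \[ \max_{v\in V'} d_{G(V')}(v,S')\le \psi. \]
   Context: Edge lengths are $d(e)=1/w(e)$; $d_H(u,S)$ is the shortest-path distance in graph $H$ from $u$ to the nearest vertex of $S$, and $G(U)$ is the subgraph induced by $U$. $F(S)=\{(u\to v): (u,v)\in E,\ d_G(u,S)+d(u,v)=d_G(v,S)\}$ is the set of (directed) forward edges induced by $S$. The cone $C_S(l,x)$ is the set of vertices reachable from $x$ by a path in $G$ such that the sum of the lengths of traversed edges that are not traversed as forward edges of $F(S)$ is at most $l$. *)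

theory Defs
  imports "HOL-Analysis.Analysis"
begin

text \<open>A weighted multigraph is given by a vertex set V, an edge set E, an endpoint map
  ends (edge e joins fst (ends e) and snd (ends e); parallel edges allowed) and
  weights w. The length of an edge is d(e) = 1 / w e.\<close>

inductive walk :: "'e set \<Rightarrow> ('e \<Rightarrow> 'v \<times> 'v) \<Rightarrow> ('e \<Rightarrow> real) \<Rightarrow> 'v set \<Rightarrow> 'v \<Rightarrow> 'v \<Rightarrow> real \<Rightarrow> bool"
  for E ends w U where
  nil: "u \<in> U \<Longrightarrow> walk E ends w U u u 0"
| cons: "\<lbrakk>e \<in> E; ends e = (u, y) \<or> ends e = (y, u); u \<in> U; walk E ends w U y v L\<rbrakk>
          \<Longrightarrow> walk E ends w U u v (1 / w e + L)"

text \<open>d_{G(U)}(u,S): shortest-path distance in G(U) from u to the nearest vertex of S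
  (infinite if no vertex of S is reachable).\<close>
definition dist_to :: "'e set \<Rightarrow> ('e \<Rightarrow> 'v \<times> 'v) \<Rightarrow> ('e \<Rightarrow> real) \<Rightarrow> 'v set \<Rightarrow> 'v \<Rightarrow> 'v set \<Rightarrow> ereal" where
  "dist_to E ends w U u S = (INF L \<in> {L. \<exists>s\<in>S. walk E ends w U u s L}. ereal L)"

definition forward :: "'v set \<Rightarrow> 'e set \<Rightarrow> ('e \<Rightarrow> 'v \<times> 'v) \<Rightarrow> ('e \<Rightarrow> real) \<Rightarrow> 'v set \<Rightarrow> 'e \<Rightarrow> 'v \<Rightarrow> 'v \<Rightarrow> bool" where
  "forward V E ends w S e u y \<longleftrightarrow> e \<in> E \<and> (ends e = (u, y) \<or> ends e = (y, u)) \<and>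
     dist_to E ends w V u S + ereal (1 / w e) = dist_to E ends w V y S"

inductive cone_walk :: "'v set \<Rightarrow> 'e set \<Rightarrow> ('e \<Rightarrow> 'v \<times> 'v) \<Rightarrow> ('e \<Rightarrow> real) \<Rightarrow> 'v set \<Rightarrow> 'v \<Rightarrow> 'v \<Rightarrow> real \<Rightarrow> bool"
  for V E ends w S x where
  nil: "x \<in> V \<Longrightarrow> cone_walk V E ends w S x x 0"
| step: "\<lbrakk>cone_walk V E ends w S x u c; e \<in> E; ends e = (u, y) \<or> ends e = (y, u); y \<in> V\<rbrakk>
          \<Longrightarrow> cone_walk V E ends w S x y
                (c + (if forward V E ends w S e u y then 0 else 1 / w e))"

definition cone :: "'v set \<Rightarrow> 'e set \<Rightarrow> ('e \<Rightarrow> 'v \<times> 'v) \<Rightarrow> ('e \<Rightarrow> real) \<Rightarrow> 'v set \<Rightarrow> real \<Rightarrow> 'v \<Rightarrow> 'v set" where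
  "cone V E ends w S l x = {v. \<exists>c. cone_walk V E ends w S x v c \<and> c \<le> l}"

end

theory Submission
  imports Defs
begin

lemma walk_nonneg:
  assumes "walk E ends w U u v L" "\<forall>e\<in>E. w e > 0"
  shows "L \<ge> 0"
  using assms by (induction rule: walk.induct) auto

lemma walk_in: "walk E ends w U u v L \<Longrightarrow> u \<in> U"
  by (induction rule: walk.induct) auto

theorem mainTheorem8:
  fixes V :: "'v set" and E :: "'e set" and ends :: "'e \<Rightarrow> 'v \<times> 'v"
    and w :: "'e \<Rightarrow> real" and S :: "'v set" and x :: 'v and l :: real
  assumes "finite V" and "finite E"
    and "\<forall>e\<in>E. fst (ends e) \<in> V \<and> snd (ends e) \<in> V"
    and "\<forall>e\<in>E. w e > 0"
    and "\<forall>u\<in>V. \<forall>v\<in>V. \<exists>L. walk E ends w V u v L"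
    and "S \<subseteq> V" and "x \<in> S" and "l \<ge> 0"
  shows "(SUP v \<in> V - cone V E ends w S l x.
            dist_to E ends w (V - cone V E ends w S l x) v (S - cone V E ends w S l x))
         \<le> (SUP v \<in> V. dist_to E ends w V v S)"
proof -
  define D where "D u = dist_to E ends w V u S" for u
  define C where "C = cone V E ends w S l x"
  have wpos: "\<forall>e\<in>E. w e > 0" by fact
  have xV: "x \<in> V" using assms(6,7) by (rule subsetD)
  have Dge: "D u \<ge> 0" for u
    unfolding D_def dist_to_def
    by (rule INF_greatest) (use walk_nonneg[OF _ wpos] in auto)
  have Dle: "D u \<le> ereal L" if "walk E ends w V u s L" "s \<in> S" for u s L
    unfolding D_def dist_to_def by (rule INF_lower2[of L]) (use that in auto)
  have Dfin: "\<exists>r. D u = ereal r" if "u \<in> V" for u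
  proof -
    have "\<exists>L. walk E ends w V u x L" using assms(5) that xV by simp
    then obtain L where "walk E ends w V u x L" by auto
    then have "D u \<le> ereal L" using Dle assms(7) by blast
    then show ?thesis using Dge[of u] by (cases "D u") auto
  qed
  define d where "d u = real_of_ereal (D u)" for u
  have Dd: "D u = ereal (d u)" if "u \<in> V" for u
    using Dfin[OF that] d_def by auto
  have bell: "\<exists>e y. e \<in> E \<and> (ends e = (u, y) \<or> ends e = (y, u)) \<and> y \<in> V \<and> d u = 1 / w e + d y"
    if u: "u \<in> V" "u \<notin> S" for u
  proof -
    define N where "N = {(e, y). e \<in> E \<and> (ends e = (u, y) \<or> ends e = (y, u))}"
    have Nsub: "N \<subseteq> E \<times> (fst ` ends ` E \<union> snd ` ends ` E)"
    proof
      fix p assume "p \<in> N"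
      then obtain e y where p: "p = (e, y)" "e \<in> E" "ends e = (u, y) \<or> ends e = (y, u)"
        unfolding N_def by auto
      then have "y = snd (ends e) \<or> y = fst (ends e)" by auto
      then show "p \<in> E \<times> (fst ` ends ` E \<union> snd ` ends ` E)" using p by auto
    qed
    have Nfin: "finite N" using Nsub assms(2) finite_subset by blast
    have NV: "y \<in> V" if "(e, y) \<in> N" for e y
      using that assms(3) unfolding N_def by (simp, metis fst_conv snd_conv)
    have "\<exists>L. walk E ends w V u x L" using assms(5) u(1) xV by simp
    then obtain L where "walk E ends w V u x L" by auto
    then obtain e y where "(e, y) \<in> N"
      using u assms(7) by (cases rule: walk.cases) (auto simp: N_def)
    then have Nne: "N \<noteq> {}" by auto
    define f where "f p = 1 / w (fst p) + d (snd p)" for p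
    obtain a where aN: "a \<in> N" and amin: "\<forall>b\<in>N. f a \<le> f b"
    proof -
      have "Min (f ` N) \<in> f ` N" using Nfin Nne by simp
      then obtain a where "a \<in> N" "f a = Min (f ` N)" by auto
      moreover have "\<forall>b\<in>N. Min (f ` N) \<le> f b" using Nfin by simp
      ultimately show ?thesis using that by auto
    qed
    obtain e0 y0 where a: "a = (e0, y0)" by fastforce
    have y0V: "y0 \<in> V" using NV aN a by simp
    have ge: "ereal (f a) \<le> D u"
      unfolding D_def dist_to_def
    proof (rule INF_greatest)
      fix L assume "L \<in> {L. \<exists>s\<in>S. walk E ends w V u s L}"
      then obtain s where s: "s \<in> S" "walk E ends w V u s L" by auto
      from s(2) show "ereal (f a) \<le> ereal L"
      proof (cases rule: walk.cases)
        case nil then show ?thesis using s u by auto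
      next
        case (cons e y L')
        then have "(e, y) \<in> N" by (auto simp: N_def)
        then have yV: "y \<in> V" using NV by auto
        have "f a \<le> f (e, y)" using amin \<open>(e, y) \<in> N\<close> by auto
        moreover have "ereal (d y) \<le> ereal L'" using Dle[OF cons(5) s(1)] Dd[OF yV] by simp
        ultimately show ?thesis using cons by (simp add: f_def)
      qed
    qed
    have le: "d u \<le> f a"
    proof (rule ccontr)
      assume "\<not> d u \<le> f a"
      then have "D y0 < ereal (d u - 1 / w e0)" using Dd[OF y0V] a by (simp add: f_def)
      then obtain L' where L': "L' \<in> {L. \<exists>s\<in>S. walk E ends w V y0 s L}" "ereal L' < ereal (d u - 1 / w e0)"
        unfolding D_def dist_to_def by (auto simp: INF_less_iff)
      then obtain s where s: "s \<in> S" "walk E ends w V y0 s L'" by auto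
      have "e0 \<in> E" "ends e0 = (u, y0) \<or> ends e0 = (y0, u)" using aN a by (auto simp: N_def)
      then have "walk E ends w V u s (1 / w e0 + L')" using s u by (intro walk.cons) auto
      then have "D u \<le> ereal (1 / w e0 + L')" using Dle s by blast
      then show False using L'(2) Dd[OF u(1)] by simp
    qed
    have "d u = f a" using ge le Dd[OF u(1)] by simp
    then show ?thesis using aN a y0V by (auto simp: N_def f_def)
  qed
  have main: "\<exists>s\<in>S - C. \<exists>L. walk E ends w (V - C) u s L \<and> L \<le> d u"
    if "u \<in> V" "u \<notin> C" for u
    using that
  proof (induction u rule: measure_induct_rule[where f = "\<lambda>u. card {v\<in>V. d v < d u}"])
    case (less u)
    show ?case
    proof (cases "u \<in> S")
      case True
      have "D u \<le> ereal 0" using Dle[of u u 0] True less.prems by (auto intro: walk.nil)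
      then have "d u \<ge> 0" using Dge[of u] Dd[OF less.prems(1)] by simp
      then show ?thesis using True less.prems by (intro bexI[of _ u] exI[of _ 0]) (auto intro: walk.nil)
    next
      case False
      obtain e y where ey: "e \<in> E" "ends e = (u, y) \<or> ends e = (y, u)" "y \<in> V" "d u = 1 / w e + d y"
        using bell[OF less.prems(1) False] by blast
      have we: "1 / w e > 0" using wpos ey(1) by auto
      have fw: "forward V E ends w S e y u"
        unfolding forward_def using ey Dd[OF ey(3)] Dd[OF less.prems(1)] D_def by auto
      have yC: "y \<notin> C"
      proof
        assume "y \<in> C"
        then obtain c where c: "cone_walk V E ends w S x y c" "c \<le> l" unfolding C_def cone_def by auto
        have "cone_walk V E ends w S x u (c + (if forward V E ends w S e y u then 0 else 1 / w e))"
          using c(1) ey(1,2) less.prems(1) by (intro cone_walk.step) auto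
        then have "cone_walk V E ends w S x u c" using fw by simp
        then show False using less.prems(2) c(2) unfolding C_def cone_def by auto
      qed
      have dlt: "d y < d u" using ey(4) we by linarith
      have sub: "{v\<in>V. d v < d y} \<subseteq> {v\<in>V. d v < d u}"
        using dlt by auto
      have yin: "y \<in> {v\<in>V. d v < d u}" "y \<notin> {v\<in>V. d v < d y}"
        using ey(3) dlt by auto
      have psub: "{v\<in>V. d v < d y} \<subset> {v\<in>V. d v < d u}"
        using sub yin by (intro psubsetI) auto
      have finB: "finite {v\<in>V. d v < d u}" using assms(1) by simp
      have lt: "card {v\<in>V. d v < d y} < card {v\<in>V. d v < d u}"
        using psub finB by (rule psubset_card_mono[rotated])
      have "\<exists>s\<in>S - C. \<exists>L. walk E ends w (V - C) y s L \<and> L \<le> d y"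
        by (rule less.IH[OF lt ey(3) yC])
      then obtain s L where sL: "s \<in> S - C" "walk E ends w (V - C) y s L" "L \<le> d y"
        by auto
      have "walk E ends w (V - C) u s (1 / w e + L)"
        using sL ey less.prems by (intro walk.cons) auto
      then show ?thesis using sL ey by (intro bexI[of _ s] exI[of _ "1 / w e + L"]) auto
    qed
  qed
  show ?thesis
    unfolding C_def[symmetric]
  proof (rule SUP_least)
    fix u assume u: "u \<in> V - C"
    then obtain s L where sL: "s \<in> S - C" "walk E ends w (V - C) u s L" "L \<le> d u"
      using main[of u] u by auto
    have "dist_to E ends w (V - C) u (S - C) \<le> ereal L"
      unfolding dist_to_def by (rule INF_lower2[of L]) (use sL in auto)
    also have "\<dots> \<le> D u" using sL Dd u by auto
    also have "\<dots> \<le> (SUP v \<in> V. dist_to E ends w V v S)"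
      unfolding D_def using u by (auto intro: SUP_upper)
    finally show "dist_to E ends w (V - C) u (S - C) \<le> (SUP v \<in> V. dist_to E ends w V v S)" .
  qed
qed

end
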